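(* Let $h:\Gamma\to\mathbb{T}A$ be a simple parametrized tropical curve with gcd $\delta_\Gamma$. Then $$\sum_{V\in V(\Gamma)}\frac{m_V}{\delta_\Gamma}\equiv 0\pmod 2.$$
   Context: $N$ is an oriented rank $2$ lattice; $\mathbb{T}A=N_\mathbb{R}/\Lambda$ with $\Lambda$ a full-rank lattice in $N_\mathbb{R}$. A parametrized tropical curve $h:\Gamma\to\mathbb{T}A$ is a map from a compact connected finite metric graph, affine on each edge with slope $u_e=w_eu'_e\in N$ ($u'_e$ primitive, $w_e\in\mathbb{Z}_{>0}$ the weight), balanced at each vertex. It is simple if $\Gamma$ is trivalent and $h$ an immersion. Its gcd $\delta_\Gamma$ is the gcd of the weights of its edges. For a trivalent vertex $V$ with outgoing slopes $a_V,b_V,-a_V-b_V$ (weights included), its multiplicity is $m_V=|\det(a_V,b_V)|$. *)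

theory Defs
  imports "HOL-Analysis.Analysis"
begin

text \<open>The lattice N is identified with int \<times> int (standard orientation);
  N_R = real \<times> real.  The torus TA = N_R / Lambda, with Lambda spanned by
  linearly independent vectors b1 b2.  Points of TA are represented by lifts.\<close>

type_synonym latN = "int \<times> int"

definition det2 :: "latN \<Rightarrow> latN \<Rightarrow> int" where
  "det2 a b = fst a * snd b - snd a * fst b"

definition toR :: "latN \<Rightarrow> real \<times> real" where
  "toR a = (real_of_int (fst a), real_of_int (snd a))"

text \<open>weight w_e: u_e = w_e * u'_e with u'_e primitive\<close>
definition weight :: "latN \<Rightarrow> int" where
  "weight a = gcd (fst a) (snd a)"

definition primdir :: "latN \<Rightarrow> latN" where
  "primdir a = (fst a div weight a, snd a div weight a)"

definition lattice_of :: "real \<times> real \<Rightarrow> real \<times> real \<Rightarrow> (real \<times> real) set" where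
  "lattice_of b1 b2 = {of_int i *\<^sub>R b1 + of_int j *\<^sub>R b2 | i j. True}"

text \<open>Flags (half-edges) at a vertex: (e, True) is the end of e at src e,
  (e, False) is the end of e at tgt e.  A loop gives two flags.\<close>
definition flags :: "'e set \<Rightarrow> ('e \<Rightarrow> 'v) \<Rightarrow> ('e \<Rightarrow> 'v) \<Rightarrow> 'v \<Rightarrow> ('e \<times> bool) set" where
  "flags E src tgt v = {(e, True) | e. e \<in> E \<and> src e = v} \<union> {(e, False) | e. e \<in> E \<and> tgt e = v}"

definition oslope :: "('e \<Rightarrow> latN) \<Rightarrow> 'e \<times> bool \<Rightarrow> latN" where
  "oslope u f = (if snd f then u (fst f) else - u (fst f))"

definition graph_connected :: "'v set \<Rightarrow> 'e set \<Rightarrow> ('e \<Rightarrow> 'v) \<Rightarrow> ('e \<Rightarrow> 'v) \<Rightarrow> bool" where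
  "graph_connected V E src tgt \<longleftrightarrow>
     (\<forall>v\<in>V. \<forall>w\<in>V. (v, w) \<in> ({(src e, tgt e) | e. e \<in> E} \<union> {(tgt e, src e) | e. e \<in> E})\<^sup>*)"

text \<open>A parametrized tropical curve h : Gamma \<rightarrow> TA: finite connected metric
  graph (vertices V, edges E with endpoints src, tgt and lengths len), positions
  pos of the vertices (lifts to N_R), affine edges with slope u e \<in> N from
  src e to tgt e, balanced at every vertex.\<close>
definition trop_curve ::
  "'v set \<Rightarrow> 'e set \<Rightarrow> ('e \<Rightarrow> 'v) \<Rightarrow> ('e \<Rightarrow> 'v) \<Rightarrow> ('e \<Rightarrow> real) \<Rightarrow>
   ('v \<Rightarrow> real \<times> real) \<Rightarrow> ('e \<Rightarrow> latN) \<Rightarrow> real \<times> real \<Rightarrow> real \<times> real \<Rightarrow> bool" where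
  "trop_curve V E src tgt len pos u b1 b2 \<longleftrightarrow>
     finite V \<and> finite E \<and>
     (\<forall>e\<in>E. src e \<in> V \<and> tgt e \<in> V) \<and>
     graph_connected V E src tgt \<and>
     \<not> collinear {0, b1, b2} \<and>
     (\<forall>e\<in>E. len e > 0) \<and>
     (\<forall>e\<in>E. u e \<noteq> 0) \<and>
     (\<forall>e\<in>E. pos (tgt e) - pos (src e) - len e *\<^sub>R toR (u e) \<in> lattice_of b1 b2) \<and>
     (\<forall>v\<in>V. (\<Sum>f\<in>flags E src tgt v. oslope u f) = 0)"

text \<open>simple: Gamma trivalent and h an immersion (outgoing primitive directions
  at each vertex pairwise distinct)\<close>
definition simple_trop_curve ::
  "'v set \<Rightarrow> 'e set \<Rightarrow> ('e \<Rightarrow> 'v) \<Rightarrow> ('e \<Rightarrow> 'v) \<Rightarrow> ('e \<Rightarrow> real) \<Rightarrow>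
   ('v \<Rightarrow> real \<times> real) \<Rightarrow> ('e \<Rightarrow> latN) \<Rightarrow> real \<times> real \<Rightarrow> real \<times> real \<Rightarrow> bool" where
  "simple_trop_curve V E src tgt len pos u b1 b2 \<longleftrightarrow>
     trop_curve V E src tgt len pos u b1 b2 \<and>
     (\<forall>v\<in>V. card (flags E src tgt v) = 3) \<and>
     (\<forall>v\<in>V. \<forall>f\<in>flags E src tgt v. \<forall>g\<in>flags E src tgt v.
        f \<noteq> g \<longrightarrow> primdir (oslope u f) \<noteq> primdir (oslope u g))"

definition curve_gcd :: "'e set \<Rightarrow> ('e \<Rightarrow> latN) \<Rightarrow> int" where
  "curve_gcd E u = Gcd (weight ` u ` E)"

definition vmult :: "'e set \<Rightarrow> ('e \<Rightarrow> 'v) \<Rightarrow> ('e \<Rightarrow> 'v) \<Rightarrow> ('e \<Rightarrow> latN) \<Rightarrow> 'v \<Rightarrow> int" where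
  "vmult E src tgt u v = (SOME m. \<exists>f\<in>flags E src tgt v. \<exists>g\<in>flags E src tgt v.
       f \<noteq> g \<and> m = \<bar>det2 (oslope u f) (oslope u g)\<bar>)"

end

theory Submission
  imports Defs
begin
definition Pc :: "latN \<Rightarrow> int" where "Pc w = (if odd (fst w) \<and> even (snd w) then 1 else 0)"

lemma parity_vertex:
  fixes a b :: latN
  shows "even (\<bar>det2 a b\<bar> + Pc a + Pc b + Pc (-(a+b)))"
proof -
  obtain a1 a2 b1 b2 where ab: "a = (a1,a2)" "b = (b1,b2)" by (cases a, cases b) auto
  show ?thesis unfolding ab det2_def Pc_def
    by (cases "even a1"; cases "even a2"; cases "even b1"; cases "even b2") auto
qed

lemma Pc_neg: "Pc (- w) = Pc w"
  by (cases w) (auto simp: Pc_def)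

lemma det2_neg_absr: "\<bar>det2 a (-(a+b))\<bar> = \<bar>det2 a b\<bar>" "\<bar>det2 b (-(a+b))\<bar> = \<bar>det2 a b\<bar>"
  "\<bar>det2 b a\<bar> = \<bar>det2 a b\<bar>" "\<bar>det2 (-(a+b)) a\<bar> = \<bar>det2 a b\<bar>" "\<bar>det2 (-(a+b)) b\<bar> = \<bar>det2 a b\<bar>"
  by (cases a; cases b; simp add: det2_def algebra_simps abs_minus_commute; argo?)+

lemma det_triple:
  assumes "a + b + c = (0::latN)"
  shows "\<bar>det2 a b\<bar> = \<bar>det2 a b\<bar> \<and> \<bar>det2 b a\<bar> = \<bar>det2 a b\<bar> \<and> \<bar>det2 a c\<bar> = \<bar>det2 a b\<bar> \<and>
         \<bar>det2 c a\<bar> = \<bar>det2 a b\<bar> \<and> \<bar>det2 b c\<bar> = \<bar>det2 a b\<bar> \<and> \<bar>det2 c b\<bar> = \<bar>det2 a b\<bar>"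
proof -
  obtain a1 a2 b1 b2 c1 c2 where ab: "a = (a1,a2)" "b = (b1,b2)" "c = (c1,c2)"
    by (cases a, cases b, cases c) auto
  have "c1 = -a1-b1" "c2 = -a2-b2" using assms unfolding ab by (auto simp: zero_prod_def)
  then have cc: "c = (-a1-b1, -a2-b2)" using ab by simp
  have "det2 a c = - det2 a b" "det2 b c = det2 a b" "det2 c a = det2 a b" "det2 c b = - det2 a b"
     "det2 b a = - det2 a b"
    unfolding cc ab(1,2) det2_def by (simp_all add: algebra_simps)
  then show ?thesis by simp
qed

lemma vmult_eq:
  assumes F: "flags E src tgt v = {x,y,z}" and d: "x \<noteq> y" "y \<noteq> z" "x \<noteq> z"
    and s: "oslope w x + oslope w y + oslope w z = 0"
  shows "vmult E src tgt w v = \<bar>det2 (oslope w x) (oslope w y)\<bar>"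
proof -
  note tri = det_triple[OF s]
  have all: "\<And>f g. f \<in> flags E src tgt v \<Longrightarrow> g \<in> flags E src tgt v \<Longrightarrow> f \<noteq> g \<Longrightarrow>
     \<bar>det2 (oslope w f) (oslope w g)\<bar> = \<bar>det2 (oslope w x) (oslope w y)\<bar>"
  proof -
    fix f g assume "f \<in> flags E src tgt v" "g \<in> flags E src tgt v" "f \<noteq> g"
    then have "(f = x \<or> f = y \<or> f = z) \<and> (g = x \<or> g = y \<or> g = z) \<and> f \<noteq> g" unfolding F by blast
    then show "\<bar>det2 (oslope w f) (oslope w g)\<bar> = \<bar>det2 (oslope w x) (oslope w y)\<bar>"
      using tri by (elim conjE disjE) (simp_all only: simp_thms)
  qed
  have xy: "x \<in> flags E src tgt v" "y \<in> flags E src tgt v" using F by auto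
  have ex: "\<exists>m. \<exists>f\<in>flags E src tgt v. \<exists>g\<in>flags E src tgt v. f \<noteq> g \<and> m = \<bar>det2 (oslope w f) (oslope w g)\<bar>"
    apply (rule exI[of _ "\<bar>det2 (oslope w x) (oslope w y)\<bar>"])
    apply (rule bexI[OF _ xy(1)], rule bexI[OF _ xy(2)])
    using d(1) by (rule conjI) (rule refl)
  have "\<exists>f\<in>flags E src tgt v. \<exists>g\<in>flags E src tgt v. f \<noteq> g \<and> vmult E src tgt w v = \<bar>det2 (oslope w f) (oslope w g)\<bar>"
    unfolding vmult_def by (rule someI_ex[OF ex])
  then obtain f g where fg: "f \<in> flags E src tgt v" "g \<in> flags E src tgt v" "f \<noteq> g"
    "vmult E src tgt w v = \<bar>det2 (oslope w f) (oslope w g)\<bar>" by blast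
  show ?thesis using all[OF fg(1-3)] fg(4) by simp
qed

lemma flags_triple:
  assumes "card (flags E src tgt v) = 3" "(\<Sum>f\<in>flags E src tgt v. oslope w f) = 0"
  shows "\<exists>x y z. flags E src tgt v = {x,y,z} \<and> x \<noteq> y \<and> y \<noteq> z \<and> x \<noteq> z \<and>
           oslope w x + oslope w y + oslope w z = 0"
proof -
  obtain x y z where F: "flags E src tgt v = {x,y,z}" "x \<noteq> y" "y \<noteq> z" "x \<noteq> z"
    using assms(1) unfolding card_3_iff by blast
  have "(\<Sum>f\<in>{x,y,z}. oslope w f) = oslope w x + (oslope w y + oslope w z)"
    using F(2-4) by simp
  then have "oslope w x + oslope w y + oslope w z = 0" using assms(2) F(1) by (simp add: add.assoc)
  with F show ?thesis by blast
qed

lemma flags_sum: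
  fixes g :: "_ \<Rightarrow> 'a::comm_monoid_add"
  assumes "finite E"
  shows "(\<Sum>f\<in>flags E src tgt v. g f) = (\<Sum>e\<in>{e\<in>E. src e = v}. g (e,True)) + (\<Sum>e\<in>{e\<in>E. tgt e = v}. g (e,False))"
proof -
  have F: "flags E src tgt v = (\<lambda>e. (e,True)) ` {e\<in>E. src e = v} \<union> (\<lambda>e. (e,False)) ` {e\<in>E. tgt e = v}"
    unfolding flags_def by auto
  have "(\<Sum>f\<in>flags E src tgt v. g f) = (\<Sum>f\<in>(\<lambda>e. (e,True)) ` {e\<in>E. src e = v}. g f) + (\<Sum>f\<in>(\<lambda>e. (e,False)) ` {e\<in>E. tgt e = v}. g f)"
    unfolding F by (rule sum.union_disjoint) (use assms in auto)
  also have "\<dots> = (\<Sum>e\<in>{e\<in>E. src e = v}. g (e,True)) + (\<Sum>e\<in>{e\<in>E. tgt e = v}. g (e,False))"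
  proof -
    have "(\<Sum>f\<in>(\<lambda>e. (e,True)) ` {e\<in>E. src e = v}. g f) = (\<Sum>e\<in>{e\<in>E. src e = v}. g (e,True))"
      by (rule sum.reindex_cong[where l="\<lambda>e. (e,True)"]) (auto simp: inj_on_def)
    moreover have "(\<Sum>f\<in>(\<lambda>e. (e,False)) ` {e\<in>E. tgt e = v}. g f) = (\<Sum>e\<in>{e\<in>E. tgt e = v}. g (e,False))"
      by (rule sum.reindex_cong[where l="\<lambda>e. (e,False)"]) (auto simp: inj_on_def)
    ultimately show ?thesis by simp
  qed
  finally show ?thesis .
qed

lemma core:
  assumes fin: "finite V" "finite E" and ends: "\<forall>e\<in>E. src e \<in> V \<and> tgt e \<in> V"
    and tri: "\<forall>v\<in>V. card (flags E src tgt v) = 3" and bal: "\<forall>v\<in>V. (\<Sum>f\<in>flags E src tgt v. oslope w f) = 0"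
  shows "even (\<Sum>v\<in>V. vmult E src tgt w v)"
proof -
  define S where "S v = (\<Sum>f\<in>flags E src tgt v. Pc (oslope w f))" for v
  have ev1: "even (vmult E src tgt w v + S v)" if v: "v \<in> V" for v
  proof -
    obtain x y z where F: "flags E src tgt v = {x,y,z}" "x \<noteq> y" "y \<noteq> z" "x \<noteq> z"
      and s: "oslope w x + oslope w y + oslope w z = 0"
      using flags_triple[OF tri[rule_format, OF v] bal[rule_format, OF v]] by blast
    have c: "oslope w z = - (oslope w x + oslope w y)" using s
      by (metis neg_eq_iff_add_eq_0)
    have "S v = Pc (oslope w x) + Pc (oslope w y) + Pc (oslope w z)"
      unfolding S_def F using F by (simp add: add.assoc)
    then show ?thesis using vmult_eq[OF F s] parity_vertex[of "oslope w x" "oslope w y"] c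
      by (simp add: add.assoc)
  qed
  have "(\<Sum>v\<in>V. S v) = (\<Sum>v\<in>V. (\<Sum>e\<in>{e\<in>E. src e = v}. Pc (oslope w (e,True)))) + (\<Sum>v\<in>V. (\<Sum>e\<in>{e\<in>E. tgt e = v}. Pc (oslope w (e,False))))"
    unfolding S_def flags_sum[OF fin(2)] by (simp add: sum.distrib)
  also have "\<dots> = (\<Sum>e\<in>E. Pc (oslope w (e,True))) + (\<Sum>e\<in>E. Pc (oslope w (e,False)))"
    using ends by (simp add: sum.group[OF fin(2) fin(1)] image_subset_iff)
  also have "\<dots> = 2 * (\<Sum>e\<in>E. Pc (w e))"
    by (simp add: oslope_def Pc_neg)
  finally have ev2: "even (\<Sum>v\<in>V. S v)" by simp
  have "even (\<Sum>v\<in>V. vmult E src tgt w v + S v)" using ev1 by (simp add: dvd_sum)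
  then have "even ((\<Sum>v\<in>V. vmult E src tgt w v) + (\<Sum>v\<in>V. S v))" by (simp add: sum.distrib)
  with ev2 show ?thesis by simp
qed

lemma scale_sum:
  fixes d :: int
  assumes "\<forall>f\<in>A. oslope u f = (d * fst (oslope w f), d * snd (oslope w f))" "d \<noteq> 0"
    "(\<Sum>f\<in>A. oslope u f) = 0"
  shows "(\<Sum>f\<in>A. oslope w f) = 0"
proof -
  have "d * fst (\<Sum>f\<in>A. oslope w f) = fst (\<Sum>f\<in>A. oslope u f)"
    using assms(1) by (simp add: fst_sum sum_distrib_left)
  moreover have "d * snd (\<Sum>f\<in>A. oslope w f) = snd (\<Sum>f\<in>A. oslope u f)"
    using assms(1) by (simp add: snd_sum sum_distrib_left)
  ultimately show ?thesis using assms(2,3) by (simp add: prod_eq_iff)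
qed

lemma flag_E: "f \<in> flags E src tgt v \<Longrightarrow> fst f \<in> E"
  unfolding flags_def by auto

theorem mainTheorem8:
  fixes V :: "'v set" and E :: "'e set" and src tgt :: "'e \<Rightarrow> 'v"
    and len :: "'e \<Rightarrow> real" and pos :: "'v \<Rightarrow> real \<times> real"
    and u :: "'e \<Rightarrow> int \<times> int" and b1 b2 :: "real \<times> real"
  assumes "simple_trop_curve V E src tgt len pos u b1 b2"
  shows "\<exists>k::int. (\<Sum>v\<in>V. real_of_int (vmult E src tgt u v) / real_of_int (curve_gcd E u))
                 = 2 * real_of_int k"
proof -
  have finV: "finite V" and finE: "finite E" and ends: "\<forall>e\<in>E. src e \<in> V \<and> tgt e \<in> V"
    and bal: "\<forall>v\<in>V. (\<Sum>f\<in>flags E src tgt v. oslope u f) = 0"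
    and tri: "\<forall>v\<in>V. card (flags E src tgt v) = 3"
    using assms unfolding simple_trop_curve_def trop_curve_def by auto
  define d where "d = curve_gcd E u"
  show ?thesis
  proof (cases "d = 0")
    case True
    then show ?thesis unfolding d_def[symmetric] by (intro exI[of _ 0]) simp
  next
    case False
    have dv: "d dvd fst (u e) \<and> d dvd snd (u e)" if "e \<in> E" for e
    proof -
      have "d dvd weight (u e)" unfolding d_def curve_gcd_def
        by (rule Gcd_dvd) (use that in blast)
      then show ?thesis unfolding weight_def by (meson dvd_trans gcd_dvd1 gcd_dvd2)
    qed
    define w where "w e = (fst (u e) div d, snd (u e) div d)" for e
    have ue: "u e = (d * fst (w e), d * snd (w e))" if "e \<in> E" for e
      using dv[OF that] unfolding w_def by (simp add: prod_eq_iff)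
    have os: "oslope u f = (d * fst (oslope w f), d * snd (oslope w f))"
      if "f \<in> flags E src tgt v" for f v
      using ue[OF flag_E[OF that]] by (simp add: oslope_def)
    have balw: "\<forall>v\<in>V. (\<Sum>f\<in>flags E src tgt v. oslope w f) = 0"
      using scale_sum[OF _ False] os bal by blast
    have vm: "vmult E src tgt u v = d^2 * vmult E src tgt w v" if v: "v \<in> V" for v
    proof -
      obtain x y z where F: "flags E src tgt v = {x,y,z}" "x \<noteq> y" "y \<noteq> z" "x \<noteq> z"
        and s: "oslope w x + oslope w y + oslope w z = 0"
        using flags_triple[OF tri[rule_format, OF v] balw[rule_format, OF v]] by blast
      have xyz: "x \<in> flags E src tgt v" "y \<in> flags E src tgt v" "z \<in> flags E src tgt v"
        using F by auto
      have "fst (oslope w x) + fst (oslope w y) + fst (oslope w z) = 0"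
        "snd (oslope w x) + snd (oslope w y) + snd (oslope w z) = 0"
        using s by (simp_all add: prod_eq_iff)
      then have su: "oslope u x + oslope u y + oslope u z = 0"
        unfolding os[OF xyz(1)] os[OF xyz(2)] os[OF xyz(3)]
        by (simp add: prod_eq_iff flip: distrib_left)
      have "det2 (oslope u x) (oslope u y) = d^2 * det2 (oslope w x) (oslope w y)"
        unfolding os[OF xyz(1)] os[OF xyz(2)] det2_def by (simp add: algebra_simps power2_eq_square)
      then show ?thesis
        unfolding vmult_eq[OF F su] vmult_eq[OF F s] by (simp add: abs_mult)
    qed
    have "even (\<Sum>v\<in>V. vmult E src tgt w v)"
      by (rule core[OF finV finE ends tri balw])
    then obtain k where k: "(\<Sum>v\<in>V. vmult E src tgt w v) = 2 * k" by blast
    have "(\<Sum>v\<in>V. real_of_int (vmult E src tgt u v) / real_of_int d)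
        = (\<Sum>v\<in>V. real_of_int d * real_of_int (vmult E src tgt w v))"
      using False by (intro sum.cong refl) (simp add: vm power2_eq_square)
    also have "\<dots> = real_of_int d * real_of_int (\<Sum>v\<in>V. vmult E src tgt w v)"
      by (simp add: sum_distrib_left)
    also have "\<dots> = 2 * real_of_int (d * k)" unfolding k by simp
    finally show ?thesis unfolding d_def by blast
  qed
qed

end
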